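(* Let $\mathfrak g$ be a unimodular Lie algebra with a Hermitian structure $(J,g)$ of complex dimension $n$. Then $g$ is Gauduchon, i.e. $\partial\bar\partial(\omega^{n-1})=0$, where $\omega$ is the Kähler form of $g$.
   Context: A Hermitian structure on a real Lie algebra $\mathfrak g$ of dimension $2n$ is an integrable almost complex structure $J$ with a $J$-invariant inner product $g$. With a unitary frame $e_1,\dots,e_n$ of $\mathfrak g^{1,0}=\{x-\sqrt{-1}Jx\}$ ($g$ extended bilinearly, $g(e_i,\bar e_j)=\delta_{ij}$) and dual coframe $\varphi_i$, $\omega=\sqrt{-1}\sum_i\varphi_i\wedge\bar\varphi_i$; $d$ is the Chevalley–Eilenberg differential on left-invariant forms and $d=\partial+\bar\partial$ its type decomposition. Unimodular: $\operatorname{tr}\mathrm{ad}_x=0$ for all $x$. *)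

theory Defs
  imports "HOL-Analysis.Analysis" "HOL-Combinatorics.Permutations"
begin

text \<open>Complexified vectors are complex^'m.  Left-invariant complex k-forms are
  functions on lists of complexified vectors (meaningful on lists of length k).\<close>

definition is_lie_algebra :: "(real^'m \<Rightarrow> real^'m \<Rightarrow> real^'m) \<Rightarrow> bool" where
  "is_lie_algebra B \<longleftrightarrow> bilinear B \<and> (\<forall>x y. B x y = - B y x) \<and>
     (\<forall>x y z. B x (B y z) + B y (B z x) + B z (B x y) = 0)"

definition unimodular :: "(real^'m \<Rightarrow> real^'m \<Rightarrow> real^'m) \<Rightarrow> bool" where
  "unimodular B \<longleftrightarrow> (\<forall>x. trace (matrix (B x)) = 0)"

text \<open>Hermitian structure: integrable almost complex structure J and J-invariant inner product g.\<close>
definition hermitian_structure ::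
  "(real^'m \<Rightarrow> real^'m \<Rightarrow> real^'m) \<Rightarrow> (real^'m \<Rightarrow> real^'m) \<Rightarrow> (real^'m \<Rightarrow> real^'m \<Rightarrow> real) \<Rightarrow> bool" where
  "hermitian_structure B J g \<longleftrightarrow>
     linear J \<and> (\<forall>x. J (J x) = - x) \<and>
     (\<forall>x y. B (J x) (J y) - J (B (J x) y) - J (B x (J y)) - B x y = 0) \<and>
     bilinear g \<and> (\<forall>x y. g x y = g y x) \<and> (\<forall>x. x \<noteq> 0 \<longrightarrow> g x x > 0) \<and>
     (\<forall>x y. g (J x) (J y) = g x y)"

definition cre :: "complex^'m \<Rightarrow> real^'m" where "cre x = (\<chi> i. Re (x $ i))"
definition cim :: "complex^'m \<Rightarrow> real^'m" where "cim x = (\<chi> i. Im (x $ i))"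
definition cpx :: "real^'m \<Rightarrow> real^'m \<Rightarrow> complex^'m" where
  "cpx a b = (\<chi> i. Complex (a $ i) (b $ i))"

definition brC :: "(real^'m \<Rightarrow> real^'m \<Rightarrow> real^'m) \<Rightarrow> complex^'m \<Rightarrow> complex^'m \<Rightarrow> complex^'m" where
  "brC B x y = cpx (B (cre x) (cre y) - B (cim x) (cim y)) (B (cre x) (cim y) + B (cim x) (cre y))"

definition JC :: "(real^'m \<Rightarrow> real^'m) \<Rightarrow> complex^'m \<Rightarrow> complex^'m" where
  "JC J x = cpx (J (cre x)) (J (cim x))"

definition gC :: "(real^'m \<Rightarrow> real^'m \<Rightarrow> real) \<Rightarrow> complex^'m \<Rightarrow> complex^'m \<Rightarrow> complex" where
  "gC g x y = Complex (g (cre x) (cre y) - g (cim x) (cim y)) (g (cre x) (cim y) + g (cim x) (cre y))"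

type_synonym 'm form = "(complex^'m) list \<Rightarrow> complex"

definition kform :: "(real^'m \<Rightarrow> real^'m) \<Rightarrow> (real^'m \<Rightarrow> real^'m \<Rightarrow> real) \<Rightarrow> 'm form" where
  "kform J g xs = gC g (JC J (xs ! 0)) (xs ! 1)"

definition wedge :: "nat \<Rightarrow> nat \<Rightarrow> 'm form \<Rightarrow> 'm form \<Rightarrow> 'm form" where
  "wedge p q \<alpha> \<beta> xs = (1 / of_nat (fact p * fact q)) *
     (\<Sum>\<sigma>\<in>{\<sigma>. \<sigma> permutes {..<p+q}}. of_int (sign \<sigma>) *
        \<alpha> (map (\<lambda>i. xs ! \<sigma> i) [0..<p]) * \<beta> (map (\<lambda>i. xs ! \<sigma> i) [p..<p+q]))"

fun kpow :: "(real^'m \<Rightarrow> real^'m) \<Rightarrow> (real^'m \<Rightarrow> real^'m \<Rightarrow> real) \<Rightarrow> nat \<Rightarrow> 'm form" where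
  "kpow J g 0 = (\<lambda>xs. 1)"
| "kpow J g (Suc j) = wedge 2 (2 * j) (kform J g) (kpow J g j)"

definition dCE :: "(real^'m \<Rightarrow> real^'m \<Rightarrow> real^'m) \<Rightarrow> nat \<Rightarrow> 'm form \<Rightarrow> 'm form" where
  "dCE B k \<alpha> xs = (\<Sum>i<k+1. \<Sum>j\<in>{i<..<k+1}. (-1) ^ (i + j) *
      \<alpha> (brC B (xs ! i) (xs ! j) # map (\<lambda>l. xs ! l) (filter (\<lambda>l. l \<noteq> i \<and> l \<noteq> j) [0..<k+1])))"

definition P10 :: "(real^'m \<Rightarrow> real^'m) \<Rightarrow> complex^'m \<Rightarrow> complex^'m" where
  "P10 J x = (1/2 :: complex) *s x - (\<i>/2) *s JC J x"
definition P01 :: "(real^'m \<Rightarrow> real^'m) \<Rightarrow> complex^'m \<Rightarrow> complex^'m" where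
  "P01 J x = (1/2 :: complex) *s x + (\<i>/2) *s JC J x"

text \<open>The (p, k-p) component of a k-form.\<close>
definition tcomp :: "(real^'m \<Rightarrow> real^'m) \<Rightarrow> nat \<Rightarrow> 'm form \<Rightarrow> 'm form" where
  "tcomp J p \<alpha> xs = (\<Sum>S\<in>{S. S \<subseteq> {..<length xs} \<and> card S = p}.
      \<alpha> (map (\<lambda>l. if l \<in> S then P10 J (xs ! l) else P01 J (xs ! l)) [0..<length xs]))"

text \<open>del and delbar on k-forms: (d alpha^{p,q})^{p+1,q} and (d alpha^{p,q})^{p,q+1}.\<close>
definition del :: "(real^'m \<Rightarrow> real^'m \<Rightarrow> real^'m) \<Rightarrow> (real^'m \<Rightarrow> real^'m) \<Rightarrow> nat \<Rightarrow> 'm form \<Rightarrow> 'm form" where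
  "del B J k \<alpha> xs = (\<Sum>p\<le>k. tcomp J (p+1) (dCE B k (tcomp J p \<alpha>)) xs)"
definition delbar :: "(real^'m \<Rightarrow> real^'m \<Rightarrow> real^'m) \<Rightarrow> (real^'m \<Rightarrow> real^'m) \<Rightarrow> nat \<Rightarrow> 'm form \<Rightarrow> 'm form" where
  "delbar B J k \<alpha> xs = (\<Sum>p\<le>k. tcomp J p (dCE B k (tcomp J p \<alpha>)) xs)"

end

theory Submission
  imports Defs
begin


definition lin1 :: "(complex^'m \<Rightarrow> complex) \<Rightarrow> bool" where
  "lin1 f \<longleftrightarrow> (\<forall>u v. f (u + v) = f u + f v) \<and> (\<forall>c u. f (c *s u) = c * f u)"

definition clin :: "(complex^'m \<Rightarrow> complex^'n) \<Rightarrow> bool" where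
  "clin f \<longleftrightarrow> (\<forall>u v. f (u + v) = f u + f v) \<and> (\<forall>c u. f (c *s u) = c *s f u)"

definition MLF :: "nat \<Rightarrow> ('m::finite) form \<Rightarrow> bool" where
  "MLF k \<alpha> \<longleftrightarrow> (\<forall>ys i. length ys = k \<longrightarrow> i < k \<longrightarrow> lin1 (\<lambda>w. \<alpha> (ys[i := w])))"

definition ALT :: "nat \<Rightarrow> ('m::finite) form \<Rightarrow> bool" where
  "ALT k \<alpha> \<longleftrightarrow> (\<forall>ys. length ys = k \<longrightarrow> \<not> distinct ys \<longrightarrow> \<alpha> ys = 0)"

lemma lin1_add: "lin1 f \<Longrightarrow> f (u + v) = f u + f v" by (simp add: lin1_def)
lemma lin1_scale: "lin1 f \<Longrightarrow> f (c *s u) = c * f u" by (simp add: lin1_def)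
lemma lin1_zero: "lin1 f \<Longrightarrow> f 0 = 0"
  using lin1_scale[of f 0 0] by simp

lemma lin1_sum: "lin1 f \<Longrightarrow> f (\<Sum>c\<in>A. g c) = (\<Sum>c\<in>A. f (g c))"
proof (induction A rule: infinite_finite_induct)
  case (infinite A) then show ?case by (simp add: lin1_zero)
next
  case empty then show ?case by (simp add: lin1_zero)
next
  case (insert x F) then show ?case by (simp add: lin1_add)
qed

lemma clin_add: "clin f \<Longrightarrow> f (u + v) = f u + f v" by (simp add: clin_def)
lemma clin_scale: "clin f \<Longrightarrow> f (c *s u) = c *s f u" by (simp add: clin_def)

lemma lin1_comp: "lin1 f \<Longrightarrow> clin L \<Longrightarrow> lin1 (\<lambda>w. f (L w))"
  by (simp add: lin1_def clin_def)

lemma lin1_plus: "lin1 f \<Longrightarrow> lin1 g \<Longrightarrow> lin1 (\<lambda>w. f w + g w)"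
  by (simp add: lin1_def algebra_simps)

lemma lin1_cmult: "lin1 f \<Longrightarrow> lin1 (\<lambda>w. c * f w)"
  by (simp add: lin1_def algebra_simps)

lemma lin1_multc: "lin1 f \<Longrightarrow> lin1 (\<lambda>w. f w * c)"
  by (simp add: lin1_def algebra_simps)

lemma lin1_const0: "lin1 (\<lambda>w. 0)" by (simp add: lin1_def)

lemma lin1_setsum: "finite A \<Longrightarrow> (\<And>a. a \<in> A \<Longrightarrow> lin1 (f a)) \<Longrightarrow> lin1 (\<lambda>w. \<Sum>a\<in>A. f a w)"
proof (induction A rule: finite_induct)
  case empty then show ?case by (simp add: lin1_const0)
next
  case (insert x F) then show ?case by (simp add: lin1_plus)
qed

lemma lin1_cong: "lin1 f \<Longrightarrow> (\<And>w. f w = g w) \<Longrightarrow> lin1 g"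
proof -
  assume "lin1 f" "\<And>w. f w = g w"
  then have "f = g" by auto
  then show "lin1 g" using \<open>lin1 f\<close> by simp
qed

lemma MLD: "MLF k \<alpha> \<Longrightarrow> length ys = k \<Longrightarrow> i < k \<Longrightarrow> lin1 (\<lambda>w. \<alpha> (ys[i := w]))"
  by (simp add: MLF_def)

lemma mlf_add: "MLF k \<alpha> \<Longrightarrow> length ys = k \<Longrightarrow> i < k \<Longrightarrow>
   \<alpha> (ys[i := u + v]) = \<alpha> (ys[i := u]) + \<alpha> (ys[i := v])"
  using MLD lin1_add by fast

lemma ALTD: "ALT k \<alpha> \<Longrightarrow> length ys = k \<Longrightarrow> \<not> distinct ys \<Longrightarrow> \<alpha> ys = 0"
  by (simp add: ALT_def)

lemma adj_swap:
  assumes ml: "MLF k F"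
    and adj: "\<And>ys a. length ys = k \<Longrightarrow> Suc a < k \<Longrightarrow> ys ! a = ys ! Suc a \<Longrightarrow> F ys = 0"
    and len: "length ys = k" and a: "Suc a < k"
  shows "F (ys[a := ys ! Suc a, Suc a := ys ! a]) = - F ys"
proof -
  define u where "u = ys ! a"
  define v where "v = ys ! Suc a"
  define Z where "Z = (\<lambda>w1 w2. ys[a := w1, Suc a := w2])"
  have Z1: "Z w1 w2 = (ys[Suc a := w2])[a := w1]" for w1 w2
    unfolding Z_def by (simp add: list_update_swap)
  have lZ: "length (Z w1 w2) = k" for w1 w2 using len by (simp add: Z_def)
  have L1: "F (Z (w1 + w1') w2) = F (Z w1 w2) + F (Z w1' w2)" for w1 w1' w2
    unfolding Z1 using ml len a by (intro mlf_add) auto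
  have L2: "F (Z w1 (w2 + w2')) = F (Z w1 w2) + F (Z w1 w2')" for w1 w2 w2'
    unfolding Z_def using ml len a by (intro mlf_add) auto
  have zz: "F (Z w w) = 0" for w
    using adj[OF lZ a] len a by (simp add: Z_def)
  have "0 = F (Z (u+v) (u+v))" using zz by simp
  also have "\<dots> = F (Z u u) + F (Z u v) + F (Z v u) + F (Z v v)"
    by (simp add: L1 L2)
  also have "\<dots> = F (Z u v) + F (Z v u)" by (simp add: zz)
  finally have "F (Z v u) = - F (Z u v)" by (simp add: eq_neg_iff_add_eq_0 add.commute)
  moreover have "Z u v = ys" unfolding Z_def u_def v_def by simp
  ultimately show ?thesis by (simp add: Z_def u_def v_def)
qed

lemma adj_to_ALT:
  assumes ml: "MLF k F"
    and adj: "\<And>ys a. length ys = k \<Longrightarrow> Suc a < k \<Longrightarrow> ys ! a = ys ! Suc a \<Longrightarrow> F ys = 0"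
  shows "ALT k F"
proof -
  have main: "\<forall>i ys. length ys = k \<longrightarrow> i + Suc d < k \<longrightarrow> ys ! i = ys ! (i + Suc d) \<longrightarrow> F ys = 0" for d
  proof (induction d)
    case 0 then show ?case using adj by auto
  next
    case (Suc d)
    show ?case
    proof (intro allI impI)
      fix i and ys :: "(complex^'a) list"
      assume len: "length ys = k" and ik: "i + Suc (Suc d) < k" and eq: "ys ! i = ys ! (i + Suc (Suc d))"
      define a where "a = i + Suc d"
      have a: "Suc a < k" using ik by (simp add: a_def)
      define ys' where "ys' = ys[a := ys ! Suc a, Suc a := ys ! a]"
      have "ys' ! i = ys ! i" using len a by (simp add: ys'_def a_def)
      moreover have "ys' ! (i + Suc d) = ys ! Suc a" using len a by (simp add: ys'_def a_def)
      ultimately have "ys' ! i = ys' ! (i + Suc d)" using eq by (simp add: a_def)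
      moreover have "length ys' = k" using len by (simp add: ys'_def)
      moreover have "length ys' = k \<longrightarrow> i + Suc d < k \<longrightarrow> ys' ! i = ys' ! (i + Suc d) \<longrightarrow> F ys' = 0"
        using Suc.IH by (elim allE[of _ i] allE[of _ ys'])
      ultimately have "F ys' = 0" using a a_def by simp
      moreover have "F ys' = - F ys" unfolding ys'_def by (rule adj_swap[OF ml adj len a])
      ultimately show "F ys = 0" by simp
    qed
  qed
  show ?thesis unfolding ALT_def
  proof (intro allI impI)
    fix ys :: "(complex^'a) list"
    assume len: "length ys = k" and nd: "\<not> distinct ys"
    then obtain i j where ij: "i < k" "j < k" "i \<noteq> j" "ys ! i = ys ! j"
      by (auto simp: distinct_conv_nth)
    show "F ys = 0"
    proof (cases "i < j")
      case True
      then obtain d where "j = Suc (i + d)" using less_imp_Suc_add by blast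
      then show ?thesis using main[of d] ij len by auto
    next
      case False
      then have "j < i" using ij by simp
      then obtain d where "i = Suc (j + d)" using less_imp_Suc_add by blast
      then show ?thesis using main[of d] ij len by auto
    qed
  qed
qed

lemma ALT_adj: "ALT k F \<Longrightarrow> length ys = k \<Longrightarrow> Suc a < k \<Longrightarrow> ys ! a = ys ! Suc a \<Longrightarrow> F ys = 0"
proof -
  assume A: "ALT k F" "length ys = k" "Suc a < k" "ys ! a = ys ! Suc a"
  have "\<not> distinct ys" unfolding distinct_conv_nth
  proof
    assume "\<forall>i<length ys. \<forall>j<length ys. i \<noteq> j \<longrightarrow> ys ! i \<noteq> ys ! j"
    then have "ys ! a \<noteq> ys ! Suc a" using A(2,3) by simp
    then show False using A(4) by simp
  qed
  then show "F ys = 0" using A(1,2) unfolding ALT_def by blast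
qed

lemma alt_swap: "MLF k F \<Longrightarrow> ALT k F \<Longrightarrow> length ys = k \<Longrightarrow> Suc a < k \<Longrightarrow>
   F (ys[a := ys ! Suc a, Suc a := ys ! a]) = - F ys"
  by (rule adj_swap) (auto intro: ALT_adj)



lemma cre_cpx[simp]: "cre (cpx a b) = a" by (simp add: cre_def cpx_def vec_eq_iff)
lemma cim_cpx[simp]: "cim (cpx a b) = b" by (simp add: cim_def cpx_def vec_eq_iff)
lemma cvec_eq: "x = y \<longleftrightarrow> cre x = cre y \<and> cim x = cim y"
  by (auto simp: cre_def cim_def vec_eq_iff complex_eq_iff)
lemma cre_add[simp]: "cre (x + y) = cre x + cre y" by (simp add: cre_def vec_eq_iff)
lemma cim_add[simp]: "cim (x + y) = cim x + cim y" by (simp add: cim_def vec_eq_iff)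
lemma cre_scale[simp]: "cre (c *s x) = Re c *\<^sub>R cre x - Im c *\<^sub>R cim x"
  by (simp add: cre_def cim_def vec_eq_iff)
lemma cim_scale[simp]: "cim (c *s x) = Re c *\<^sub>R cim x + Im c *\<^sub>R cre x"
  by (simp add: cre_def cim_def vec_eq_iff)
lemma cre_0[simp]: "cre 0 = 0" by (simp add: cre_def vec_eq_iff)
lemma cim_0[simp]: "cim 0 = 0" by (simp add: cim_def vec_eq_iff)
lemma cre_diff[simp]: "cre (x - y) = cre x - cre y" by (simp add: cre_def vec_eq_iff)
lemma cim_diff[simp]: "cim (x - y) = cim x - cim y" by (simp add: cim_def vec_eq_iff)

lemma JC_clin: "linear J \<Longrightarrow> clin (JC J)"
  unfolding clin_def JC_def
  by (simp add: cvec_eq linear_add linear_diff linear_scale)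

lemma P10_clin: "linear J \<Longrightarrow> clin (P10 J)"
  unfolding clin_def P10_def using JC_clin[of J]
  by (simp add: clin_def vector_ssub_ldistrib vector_sadd_rdistrib vector_add_ldistrib vector_smult_assoc
     algebra_simps)

lemma P01_clin: "linear J \<Longrightarrow> clin (P01 J)"
  unfolding clin_def P01_def using JC_clin[of J]
  by (simp add: clin_def vector_ssub_ldistrib vector_sadd_rdistrib vector_add_ldistrib vector_smult_assoc
     algebra_simps)

lemma brC_clin_r: "bilinear B \<Longrightarrow> clin (brC B x)"
  unfolding clin_def brC_def
  by (simp add: cvec_eq bilinear_radd bilinear_rsub bilinear_rmul algebra_simps)

lemma brC_clin_l: "bilinear B \<Longrightarrow> clin (\<lambda>x. brC B x y)"
  unfolding clin_def brC_def
  by (simp add: cvec_eq bilinear_ladd bilinear_lsub bilinear_lmul algebra_simps)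

lemma cre_neg[simp]: "cre (- x) = - cre x" by (simp add: cre_def vec_eq_iff)
lemma cim_neg[simp]: "cim (- x) = - cim x" by (simp add: cim_def vec_eq_iff)

lemma brC_antisym: assumes "\<forall>x y. B x y = - B y x" shows "brC B x y = - brC B y x"
proof -
  have 1: "B (cre y) (cre x) = - B (cre x) (cre y)" "B (cim y) (cim x) = - B (cim x) (cim y)"
     "B (cre y) (cim x) = - B (cim x) (cre y)" "B (cim y) (cre x) = - B (cre x) (cim y)"
    using assms by blast+
  show ?thesis unfolding brC_def cvec_eq by (simp only: 1 cre_cpx cim_cpx cre_neg cim_neg) simp
qed

lemma brC_self: assumes "\<forall>x y. B x y = - B y x" shows "brC B x x = 0"
proof -
  have h: "brC B x x = - brC B x x" by (rule brC_antisym[OF assms])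
  have "\<forall>i. brC B x x $ i = - (brC B x x $ i)" using h by (metis vector_uminus_component)
  then have "\<forall>i. brC B x x $ i = 0" by (simp add: complex_eq_iff)
  then show ?thesis by (simp add: vec_eq_iff)
qed

lemma gC_lin_r: "bilinear g \<Longrightarrow> lin1 (gC g x)"
  unfolding lin1_def gC_def
  by (simp add: complex_eq_iff bilinear_radd bilinear_rsub bilinear_rmul algebra_simps)

lemma gC_lin_l: "bilinear g \<Longrightarrow> lin1 (\<lambda>x. gC g x y)"
  unfolding lin1_def gC_def
  by (simp add: complex_eq_iff bilinear_ladd bilinear_lsub bilinear_lmul algebra_simps)

lemma kform_ML:
  assumes "linear J" "bilinear g"
  shows "MLF 2 (kform J g)"
  unfolding MLF_def
proof (intro allI impI)
  fix ys :: "(complex^'a) list" and i :: nat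
  assume len: "length ys = 2" and i: "i < 2"
  show "lin1 (\<lambda>w. kform J g (ys[i := w]))"
  proof (cases "i = 0")
    case True
    have "lin1 (\<lambda>w. gC g (JC J w) (ys ! 1))"
      by (rule lin1_comp[OF gC_lin_l[OF assms(2)] JC_clin[OF assms(1)]])
    then show ?thesis using True len by (simp add: kform_def)
  next
    case False
    then have "i = 1" using i by simp
    then show ?thesis using len gC_lin_r[OF assms(2)] by (simp add: kform_def)
  qed
qed



lemma map_upd_perm:
  assumes s: "\<sigma> permutes {..<N}" and len: "length xs = N" and l: "l < N" and b: "b \<le> N"
  shows "map (\<lambda>i. xs[l := w] ! \<sigma> i) [a..<b] =
    (if a \<le> inv \<sigma> l \<and> inv \<sigma> l < b then (map (\<lambda>i. xs ! \<sigma> i) [a..<b])[inv \<sigma> l - a := w]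
     else map (\<lambda>i. xs ! \<sigma> i) [a..<b])"
proof -
  have iff: "\<sigma> x = l \<longleftrightarrow> x = inv \<sigma> l" for x
    using permutes_inverses[OF s] by metis
  have lt: "\<sigma> x < N" if "x < N" for x using permutes_in_image[OF s] that by auto
  have iff2: "l = \<sigma> x \<longleftrightarrow> x = inv \<sigma> l" for x using iff by metis
  have sl: "\<sigma> (inv \<sigma> l) = l" using iff by simp
  show ?thesis
    by (rule nth_equalityI) (use len b lt l in \<open>auto simp: nth_list_update iff2 sl\<close>)
qed

lemma wedge_ALT: "ALT (p+q) (wedge p q \<alpha> \<beta>)"
  unfolding ALT_def
proof (intro allI impI)
  fix xs :: "(complex^'a) list"
  assume len: "length xs = p + q" and nd: "\<not> distinct xs"
  then obtain i j where ij: "i < p+q" "j < p+q" "i \<noteq> j" "xs ! i = xs ! j"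
    by (auto simp: distinct_conv_nth)
  define P where "P = {\<sigma>. \<sigma> permutes {..<p+q}}"
  define \<tau> where "\<tau> = Transposition.transpose i j"
  define f where "f = (\<lambda>\<sigma>. of_int (sign \<sigma>) *
        \<alpha> (map (\<lambda>i. xs ! \<sigma> i) [0..<p]) * \<beta> (map (\<lambda>i. xs ! \<sigma> i) [p..<p+q]) :: complex)"
  have tP: "\<tau> permutes {..<p+q}" unfolding \<tau>_def using ij by (intro permutes_swap_id) auto
  have xt: "xs ! \<tau> m = xs ! m" for m using ij by (cases "m = i"; cases "m = j") (auto simp: \<tau>_def)
  have tt: "\<tau> \<circ> (\<tau> \<circ> \<sigma>) = \<sigma>" for \<sigma> by (simp add: fun_eq_iff \<tau>_def)
  have "sum f P = sum (\<lambda>\<sigma>. f (\<tau> \<circ> \<sigma>)) P"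
    by (rule sum.reindex_bij_witness[where i="\<lambda>\<sigma>. \<tau> \<circ> \<sigma>" and j="\<lambda>\<sigma>. \<tau> \<circ> \<sigma>"])
       (auto simp: P_def tt intro: permutes_compose[OF _ tP])
  also have "\<dots> = sum (\<lambda>\<sigma>. - f \<sigma>) P"
  proof (rule sum.cong[OF refl])
    fix \<sigma> assume "\<sigma> \<in> P"
    then have sp: "\<sigma> permutes {..<p+q}" by (simp add: P_def)
    have "sign (\<tau> \<circ> \<sigma>) = sign \<tau> * sign \<sigma>"
      by (rule sign_compose) (use tP sp in \<open>auto intro: permutes_imp_permutation\<close>)
    moreover have "sign \<tau> = -1" using ij by (simp add: \<tau>_def sign_swap_id)
    ultimately show "f (\<tau> \<circ> \<sigma>) = - f \<sigma>" by (simp add: f_def xt)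
  qed
  finally have "sum f P = 0" by (simp add: sum_negf)
  then show "wedge p q \<alpha> \<beta> xs = 0" unfolding wedge_def f_def P_def by simp
qed

lemma wedge_ML:
  assumes a: "MLF p \<alpha>" and b: "MLF q \<beta>"
  shows "MLF (p+q) (wedge p q \<alpha> \<beta>)"
  unfolding MLF_def
proof (intro allI impI)
  fix xs :: "(complex^'a) list" and l
  assume len: "length xs = p + q" and l: "l < p + q"
  define P where "P = {\<sigma>. \<sigma> permutes {..<p+q}}"
  have fin: "finite P" unfolding P_def by (rule finite_permutations) simp
  have T: "lin1 (\<lambda>w. of_int (sign \<sigma>) * \<alpha> (map (\<lambda>i. xs[l:=w] ! \<sigma> i) [0..<p]) *
                \<beta> (map (\<lambda>i. xs[l:=w] ! \<sigma> i) [p..<p+q]))" if sP: "\<sigma> \<in> P" for \<sigma>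
  proof -
    have sp: "\<sigma> permutes {..<p+q}" using sP by (simp add: P_def)
    have m: "inv \<sigma> l < p + q" using permutes_in_image[OF permutes_inv[OF sp]] l by auto
    note mu = map_upd_perm[OF sp len l]
    show ?thesis
    proof (cases "inv \<sigma> l < p")
      case True
      have "lin1 (\<lambda>w. \<alpha> ((map (\<lambda>i. xs ! \<sigma> i) [0..<p])[inv \<sigma> l := w]))"
        using True by (intro MLD[OF a]) auto
      then have X: "lin1 (\<lambda>w. of_int (sign \<sigma>) * \<alpha> ((map (\<lambda>i. xs ! \<sigma> i) [0..<p])[inv \<sigma> l := w]) *
                \<beta> (map (\<lambda>i. xs ! \<sigma> i) [p..<p+q]))" by (intro lin1_multc lin1_cmult)
      have e1: "map (\<lambda>i. xs[l := w] ! \<sigma> i) [0..<p] = (map (\<lambda>i. xs ! \<sigma> i) [0..<p])[inv \<sigma> l := w]" for w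
        using True mu[where a=0 and b=p] by simp
      have e2: "map (\<lambda>i. xs[l := w] ! \<sigma> i) [p..<p+q] = map (\<lambda>i. xs ! \<sigma> i) [p..<p+q]" for w
        using True mu[where a=p and b="p+q"] by simp
      show ?thesis unfolding e1 e2 by (rule X)
    next
      case False
      have "lin1 (\<lambda>w. \<beta> ((map (\<lambda>i. xs ! \<sigma> i) [p..<p+q])[inv \<sigma> l - p := w]))"
        using False m by (intro MLD[OF b]) auto
      then have X: "lin1 (\<lambda>w. of_int (sign \<sigma>) * \<alpha> (map (\<lambda>i. xs ! \<sigma> i) [0..<p]) *
                \<beta> ((map (\<lambda>i. xs ! \<sigma> i) [p..<p+q])[inv \<sigma> l - p := w]))" by (intro lin1_cmult)
      have e1: "map (\<lambda>i. xs[l := w] ! \<sigma> i) [0..<p] = map (\<lambda>i. xs ! \<sigma> i) [0..<p]" for w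
        using False mu[where a=0 and b=p] by simp
      have e2: "map (\<lambda>i. xs[l := w] ! \<sigma> i) [p..<p+q] = (map (\<lambda>i. xs ! \<sigma> i) [p..<p+q])[inv \<sigma> l - p := w]" for w
        using False m mu[where a=p and b="p+q"] by simp
      show ?thesis unfolding e1 e2 by (rule X)
    qed
  qed
  have "lin1 (\<lambda>w. (1 / of_nat (fact p * fact q)) * (\<Sum>\<sigma>\<in>P. of_int (sign \<sigma>) *
      \<alpha> (map (\<lambda>i. xs[l:=w] ! \<sigma> i) [0..<p]) * \<beta> (map (\<lambda>i. xs[l:=w] ! \<sigma> i) [p..<p+q])))"
    by (intro lin1_cmult lin1_setsum fin T)
  then show "lin1 (\<lambda>w. wedge p q \<alpha> \<beta> (xs[l := w]))" unfolding wedge_def P_def by simp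
qed

lemma kpow_ML_ALT:
  assumes "linear J" "bilinear g"
  shows "MLF (2*j) (kpow J g j) \<and> ALT (2*j) (kpow J g j)"
proof (induction j)
  case 0 then show ?case by (simp add: MLF_def ALT_def)
next
  case (Suc j)
  have "MLF (2 + 2*j) (kpow J g (Suc j))"
    using wedge_ML[OF kform_ML[OF assms] conjunct1[OF Suc.IH]] by simp
  moreover have "ALT (2 + 2*j) (kpow J g (Suc j))"
    using wedge_ALT[of 2 "2*j" "kform J g" "kpow J g j"] by simp
  ultimately show ?case by simp
qed



lemma tcomp_ML:
  assumes J: "linear J" and a: "MLF k \<alpha>"
  shows "MLF k (tcomp J p \<alpha>)"
  unfolding MLF_def
proof (intro allI impI)
  fix xs :: "(complex^'a) list" and i
  assume len: "length xs = k" and i: "i < k"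
  define SS where "SS = {S. S \<subseteq> {..<k} \<and> card S = p}"
  have fin: "finite SS" unfolding SS_def by (rule finite_subset[of _ "Pow {..<k}"]) auto
  define L where "L = (\<lambda>S. map (\<lambda>l. if l \<in> S then P10 J (xs ! l) else P01 J (xs ! l)) [0..<k])"
  have e: "map (\<lambda>l. if l \<in> S then P10 J (xs[i:=w] ! l) else P01 J (xs[i:=w] ! l)) [0..<k]
      = (L S)[i := (if i \<in> S then P10 J w else P01 J w)]" for S w
    by (rule nth_equalityI) (use len i in \<open>auto simp: L_def nth_list_update\<close>)
  have "lin1 (\<lambda>w. \<alpha> ((L S)[i := (if i \<in> S then P10 J w else P01 J w)]))" for S
  proof (cases "i \<in> S")
    case True
    have "lin1 (\<lambda>w. \<alpha> ((L S)[i := P10 J w]))"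
      by (rule lin1_comp[OF MLD[OF a] P10_clin[OF J]]) (use len i in \<open>auto simp: L_def\<close>)
    then show ?thesis using True by simp
  next
    case False
    have "lin1 (\<lambda>w. \<alpha> ((L S)[i := P01 J w]))"
      by (rule lin1_comp[OF MLD[OF a] P01_clin[OF J]]) (use len i in \<open>auto simp: L_def\<close>)
    then show ?thesis using False by simp
  qed
  then have "lin1 (\<lambda>w. \<Sum>S\<in>SS. \<alpha> ((L S)[i := (if i \<in> S then P10 J w else P01 J w)]))"
    by (intro lin1_setsum fin)
  then show "lin1 (\<lambda>w. tcomp J p \<alpha> (xs[i := w]))"
    unfolding tcomp_def using len by (simp add: e SS_def)
qed

lemma tcomp_adj:
  assumes J: "linear J" and a: "MLF k \<alpha>" and al: "ALT k \<alpha>"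
    and len: "length xs = k" and sa: "Suc a < k" and eq: "xs ! a = xs ! Suc a"
  shows "tcomp J p \<alpha> xs = 0"
proof -
  define SS where "SS = {S. S \<subseteq> {..<k} \<and> card S = p}"
  define g where "g = (\<lambda>S l. if l \<in> S then P10 J (xs ! l) else P01 J (xs ! l))"
  define L where "L = (\<lambda>S. map (g S) [0..<k])"
  define f where "f = (\<lambda>S. \<alpha> (L S))"
  define sw where "sw = (\<lambda>x. if x = a then Suc a else if x = Suc a then a else x)"
  have sws: "sw (sw x) = x" for x by (simp add: sw_def)
  have swi: "sw ` (sw ` S) = S" for S by (simp add: image_image sws)
  have swk: "sw x < k \<longleftrightarrow> x < k" for x using sa by (cases "x = a"; cases "x = Suc a") (auto simp: sw_def)
  have xsw: "xs ! sw l = xs ! l" for l using eq by (cases "l = a"; cases "l = Suc a") (auto simp: sw_def)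
  have insw: "l \<in> sw ` S \<longleftrightarrow> sw l \<in> S" for l S
    by (metis image_iff sws)
  have mem: "sw ` S \<in> SS" if "S \<in> SS" for S
  proof -
    have S: "S \<subseteq> {..<k}" "card S = p" using that by (auto simp: SS_def)
    have "inj_on sw S" by (metis inj_on_def sws)
    then have "card (sw ` S) = p" using S by (simp add: card_image)
    moreover have "sw ` S \<subseteq> {..<k}" using S swk by auto
    ultimately show "sw ` S \<in> SS" by (simp add: SS_def)
  qed
  have "sum f SS = sum (\<lambda>S. f (sw ` S)) SS"
    by (rule sum.reindex_bij_witness[where i="\<lambda>S. sw ` S" and j="\<lambda>S. sw ` S"]) (auto simp: swi mem)
  also have "\<dots> = sum (\<lambda>S. - f S) SS"
  proof (rule sum.cong[OF refl])
    fix S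
    have gsw: "g (sw ` S) l = g S (sw l)" for l
      unfolding g_def insw using xsw[of l] by simp
    have "L (sw ` S) ! t = (L S)[a := L S ! Suc a, Suc a := L S ! a] ! t" if t: "t < k" for t
    proof -
      have "L (sw ` S) ! t = g S (sw t)" using t by (simp add: L_def gsw)
      moreover have "(L S)[a := L S ! Suc a, Suc a := L S ! a] ! t = g S (sw t)"
        using t sa by (auto simp: L_def sw_def nth_list_update)
      ultimately show ?thesis by simp
    qed
    then have "L (sw ` S) = (L S)[a := L S ! Suc a, Suc a := L S ! a]"
      by (intro nth_equalityI) (auto simp: L_def)
    moreover have "length (L S) = k" by (simp add: L_def)
    ultimately show "f (sw ` S) = - f S" unfolding f_def using alt_swap[OF a al _ sa] by simp
  qed
  finally have "sum f SS = 0" by (simp add: sum_negf)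
  then show ?thesis unfolding tcomp_def f_def L_def g_def SS_def using len by simp
qed

lemma tcomp_ALT:
  assumes J: "linear J" and a: "MLF k \<alpha>" and al: "ALT k \<alpha>"
  shows "ALT k (tcomp J p \<alpha>)"
  by (rule adj_to_ALT[OF tcomp_ML[OF J a]]) (rule tcomp_adj[OF J a al])



definition swp :: "nat \<Rightarrow> nat \<Rightarrow> nat" where
  "swp a x = (if x = a then Suc a else if x = Suc a then a else x)"

lemma swp_swp[simp]: "swp a (swp a x) = x" by (simp add: swp_def)
lemma swp_a[simp]: "swp a a = Suc a" by (simp add: swp_def)
lemma swp_Suc[simp]: "swp a (Suc a) = a" by (simp add: swp_def)

lemma upt_split3: "m < K \<Longrightarrow> [0..<K] = [0..<m] @ m # [Suc m..<K]"
  using upt_add_eq_append[of 0 m "K - m"] upt_conv_Cons[of m K] by simp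

lemma map_nth_upd_filter:
  assumes len: "length xs = K" and m: "m < K" and P: "P m"
  shows "map (nth (xs[m:=w])) (filter P [0..<K]) =
          (map (nth xs) (filter P [0..<K]))[length (filter P [0..<m]) := w]"
    and "length (filter P [0..<m]) < length (filter P [0..<K])"
proof -
  have A: "map (nth (xs[m:=w])) (filter P [0..<m]) = map (nth xs) (filter P [0..<m])"
    by (rule map_cong) auto
  have C: "map (nth (xs[m:=w])) (filter P [Suc m..<K]) = map (nth xs) (filter P [Suc m..<K])"
    by (rule map_cong) auto
  show "map (nth (xs[m:=w])) (filter P [0..<K]) =
          (map (nth xs) (filter P [0..<K]))[length (filter P [0..<m]) := w]"
    unfolding upt_split3[OF m] using len m P by (simp add: A C list_update_append)
  show "length (filter P [0..<m]) < length (filter P [0..<K])"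
    unfolding upt_split3[OF m] using P by simp
qed

lemma length_rest:
  assumes "i < j" "j < K"
  shows "length (filter (\<lambda>l. l \<noteq> i \<and> l \<noteq> j) [0..<K]) = K - 2"
proof -
  have "{t. t < length [0..<K] \<and> [0..<K] ! t \<noteq> i \<and> [0..<K] ! t \<noteq> j} = {..<K} - {i, j}"
    by auto
  moreover have "card ({..<K} - {i, j}) = K - 2"
    using assms by (subst card_Diff_subset) auto
  ultimately show ?thesis by (simp add: length_filter_conv_card)
qed

lemma filter_swap:
  assumes sa: "Suc a < K" and eq: "ys ! a = ys ! Suc a"
  shows "map (nth ys) (filter (\<lambda>l. Q (swp a l)) [0..<K]) = map (nth ys) (filter Q [0..<K])"
proof -
  have U: "[0..<K] = [0..<a] @ a # Suc a # [Suc (Suc a)..<K]"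
    using upt_split3[of a K] upt_conv_Cons[of "Suc a" K] sa by simp
  have A: "filter (\<lambda>l. Q (swp a l)) [0..<a] = filter Q [0..<a]"
    by (rule filter_cong) (auto simp: swp_def)
  have C: "filter (\<lambda>l. Q (swp a l)) [Suc (Suc a)..<K] = filter Q [Suc (Suc a)..<K]"
    by (rule filter_cong) (auto simp: swp_def)
  show ?thesis unfolding U using eq by (cases "Q a"; cases "Q (Suc a)") (simp_all add: A C)
qed



lemma dCE_ML:
  assumes B: "bilinear B" and a: "MLF k \<alpha>"
  shows "MLF (Suc k) (dCE B k \<alpha>)"
  unfolding MLF_def
proof (intro allI impI)
  fix xs :: "(complex^'a) list" and m
  assume len: "length xs = Suc k" and m: "m < Suc k"
  have T: "lin1 (\<lambda>w. \<alpha> (brC B (xs[m:=w] ! i) (xs[m:=w] ! j) #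
              map (\<lambda>l. xs[m:=w] ! l) (filter (\<lambda>l. l \<noteq> i \<and> l \<noteq> j) [0..<Suc k])))"
    if ij: "i < j" "j < Suc k" for i j
  proof -
    define P where "P = (\<lambda>l. l \<noteq> i \<and> l \<noteq> j)"
    define R where "R = map (nth xs) (filter P [0..<Suc k])"
    have lR: "length R = k - 1" using length_rest[OF ij] by (simp add: R_def P_def)
    have k1: "1 \<le> k" using ij by simp
    have lin0: "lin1 (\<lambda>v. \<alpha> (v # R))"
    proof -
      have "lin1 (\<lambda>v. \<alpha> ((0 # R)[0 := v]))" by (rule MLD[OF a]) (use lR k1 in auto)
      then show ?thesis by simp
    qed
    show ?thesis
    proof (cases "m = i \<or> m = j")
      case True
      have mapeq: "map (\<lambda>l. xs[m:=w] ! l) (filter P [0..<Suc k]) = R" for w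
        unfolding R_def by (rule map_cong) (use True in \<open>auto simp: P_def simp del: upt_Suc\<close>)
      show ?thesis
      proof (cases "m = i")
        case True
        have "lin1 (\<lambda>w. \<alpha> (brC B w (xs ! j) # R))"
          by (rule lin1_comp[OF lin0 brC_clin_l[OF B]])
        then show ?thesis using True ij len mapeq[unfolded P_def] by simp
      next
        case False
        then have mj: "m = j" using True by simp
        have "lin1 (\<lambda>w. \<alpha> (brC B (xs ! i) w # R))"
          by (rule lin1_comp[OF lin0 brC_clin_r[OF B]])
        then show ?thesis using mj ij len mapeq[unfolded P_def] by simp
      qed
    next
      case False
      then have Pm: "P m" by (simp add: P_def)
      note mu = map_nth_upd_filter[OF len m, of P, OF Pm]
      define pos where "pos = length (filter P [0..<m])"
      have pos: "Suc pos < k" using mu(2) lR k1 by (simp add: pos_def R_def)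
      define b where "b = brC B (xs ! i) (xs ! j)"
      have "lin1 (\<lambda>w. \<alpha> ((b # R)[Suc pos := w]))" by (rule MLD[OF a]) (use lR k1 pos in auto)
      moreover have "map (\<lambda>l. xs[m:=w] ! l) (filter (\<lambda>l. l \<noteq> i \<and> l \<noteq> j) [0..<Suc k]) = R[pos := w]" for w
        using mu(1)[of w] by (simp add: R_def pos_def P_def)
      moreover have "xs[m:=w] ! i = xs ! i" "xs[m:=w] ! j = xs ! j" for w using False by auto
      ultimately show ?thesis by (simp add: b_def)
    qed
  qed
  show "lin1 (\<lambda>w. dCE B k \<alpha> (xs[m := w]))"
    unfolding dCE_def by (intro lin1_setsum lin1_cmult) (auto simp del: upt_Suc intro: T)
qed



lemma dCE_adj:
  assumes B: "bilinear B" and anti: "\<forall>x y. B x y = - B y x"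
    and a: "MLF k \<alpha>" and al: "ALT k \<alpha>"
    and len: "length xs = Suc k" and sa: "Suc a < Suc k" and eq: "xs ! a = xs ! Suc a"
  shows "dCE B k \<alpha> xs = 0"
proof -
  define K where "K = Suc k"
  define T where "T = (\<lambda>(i,j). (-1::complex)^(i+j) *
      \<alpha> (brC B (xs!i) (xs!j) # map (nth xs) (filter (\<lambda>l. l \<noteq> i \<and> l \<noteq> j) [0..<K])))"
  define PP where "PP = Sigma {..<K} (\<lambda>i. {i<..<K})"
  have dsum: "dCE B k \<alpha> xs = sum T PP"
    unfolding dCE_def T_def PP_def K_def Suc_eq_plus1 by (rule sum.Sigma) auto
  define h where "h = (\<lambda>(i,j). if (i,j) = (a, Suc a) then (i,j) else (swp a i, swp a j))"
  have xsw: "xs ! swp a l = xs ! l" for l using eq by (simp add: swp_def)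
  have hP: "h p \<in> PP" if "p \<in> PP" for p
    using that sa by (cases p) (auto simp: h_def PP_def K_def swp_def)
  have hh: "h (h p) = p" if "p \<in> PP" for p
    using that by (cases p) (auto simp: h_def PP_def K_def swp_def)
  have Th: "T (h p) = - T p" if "p \<in> PP" for p
  proof -
    obtain i j where p: "p = (i,j)" by (cases p)
    have ij: "i < j" "j < K" using that p by (auto simp: PP_def)
    define R where "R = map (nth xs) (filter (\<lambda>l. l \<noteq> i \<and> l \<noteq> j) [0..<K])"
    have lR: "length R = k - 1" using length_rest[OF ij] by (simp add: R_def K_def)
    have k1: "1 \<le> k" using ij K_def by simp
    have Tp: "T p = (-1)^(i+j) * \<alpha> (brC B (xs!i) (xs!j) # R)" by (simp add: T_def p R_def)
    show ?thesis
    proof (cases "(i,j) = (a, Suc a)")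
      case True
      then have hp: "h p = p" by (simp add: h_def p)
      have "brC B (xs!i) (xs!j) = 0" using True eq brC_self[OF anti] by simp
      moreover have "\<alpha> (0 # R) = 0"
      proof -
        have "lin1 (\<lambda>v. \<alpha> ((0 # R)[0 := v]))" by (rule MLD[OF a]) (use lR k1 in auto)
        from lin1_zero[OF this] show ?thesis by simp
      qed
      ultimately have "T p = 0" using Tp by simp
      then show ?thesis using hp by simp
    next
      case ne: False
      show ?thesis
      proof (cases "i \<in> {a, Suc a} \<or> j \<in> {a, Suc a}")
        case False
        then have hp: "h p = p" by (auto simp: h_def p swp_def)
        define F where "F = filter (\<lambda>l. l \<noteq> i \<and> l \<noteq> j) [0..<K]"
        have inF: "a \<in> set F" "Suc a \<in> set F" using False sa by (auto simp: F_def K_def)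
        have "\<not> distinct R"
        proof
          assume "distinct R"
          then have "inj_on (nth xs) (set F)" by (simp add: R_def F_def distinct_map)
          then show False using inF eq by (metis inj_on_def n_not_Suc_n)
        qed
        then have "\<not> distinct (brC B (xs!i) (xs!j) # R)" by simp
        then have "T p = 0" using Tp ALTD[OF al] lR k1 by simp
        then show ?thesis using hp by simp
      next
        case True
        then have hp: "h p = (swp a i, swp a j)" using ne by (simp add: h_def p)
        have par: "swp a i + swp a j = Suc (i+j) \<or> i + j = Suc (swp a i + swp a j)"
          using True ne ij by (auto simp: swp_def)
        have sg: "(-1::complex)^(swp a i + swp a j) = - ((-1::complex)^(i+j))"
          using par by auto
        have fe: "(\<lambda>l. l \<noteq> swp a i \<and> l \<noteq> swp a j) = (\<lambda>l. (\<lambda>l. l \<noteq> i \<and> l \<noteq> j) (swp a l))"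
          by (auto simp: fun_eq_iff)
        have "map (nth xs) (filter (\<lambda>l. l \<noteq> swp a i \<and> l \<noteq> swp a j) [0..<K]) = R"
          unfolding fe R_def by (rule filter_swap) (use sa eq K_def in auto)
        then have "T (h p) = (-1::complex)^(swp a i + swp a j) * \<alpha> (brC B (xs!i) (xs!j) # R)"
          by (simp add: hp T_def xsw)
        then show ?thesis using Tp sg by simp
      qed
    qed
  qed
  have "sum T PP = sum (\<lambda>p. T (h p)) PP"
    by (rule sum.reindex_bij_witness[where i=h and j=h]) (auto simp: hP hh)
  also have "\<dots> = - sum T PP" by (simp add: Th sum_negf)
  finally have "sum T PP = 0" by simp
  then show ?thesis using dsum by simp
qed

lemma dCE_ALT:
  assumes B: "bilinear B" and anti: "\<forall>x y. B x y = - B y x"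
    and a: "MLF k \<alpha>" and al: "ALT k \<alpha>"
  shows "ALT (Suc k) (dCE B k \<alpha>)"
  by (rule adj_to_ALT[OF dCE_ML[OF B a]]) (rule dCE_adj[OF B anti a al])



lemma basis_red:
  assumes ml: "MLF n F"
    and bas: "\<And>f. F (map (\<lambda>l. axis (f l) 1) [0..<n]) = 0"
    and len: "length xs = n"
  shows "F xs = 0"
proof -
  have "\<forall>xs. length xs = n \<longrightarrow> (\<forall>l. m \<le> l \<and> l < n \<longrightarrow> xs ! l \<in> range (\<lambda>c. axis c 1)) \<longrightarrow> F xs = 0" for m
  proof (induction m)
    case 0
    show ?case
    proof (intro allI impI)
      fix xs :: "(complex^'a) list"
      assume l: "length xs = n" and h: "\<forall>l. 0 \<le> l \<and> l < n \<longrightarrow> xs ! l \<in> range (\<lambda>c. axis c 1)"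
      define f where "f = (\<lambda>l. SOME c. xs ! l = axis c 1)"
      have "xs ! l = axis (f l) 1" if "l < n" for l
      proof -
        have "\<exists>c. xs ! l = axis c 1" using h that by auto
        then show ?thesis unfolding f_def by (rule someI_ex)
      qed
      then have "xs = map (\<lambda>l. axis (f l) 1) [0..<n]" using l by (intro nth_equalityI) auto
      then show "F xs = 0" using bas by simp
    qed
  next
    case (Suc m)
    show ?case
    proof (intro allI impI)
      fix xs :: "(complex^'a) list"
      assume l: "length xs = n" and h: "\<forall>l. Suc m \<le> l \<and> l < n \<longrightarrow> xs ! l \<in> range (\<lambda>c. axis c 1)"
      show "F xs = 0"
      proof (cases "m < n")
        case False
        then show ?thesis using Suc.IH l by auto
      next
        case True
        have lin: "lin1 (\<lambda>w. F (xs[m := w]))" by (rule MLD[OF ml l True])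
        have "xs ! m = (\<Sum>c\<in>UNIV. (xs ! m $ c) *s axis c 1)" by (simp add: basis_expansion)
        then have "F xs = F (xs[m := (\<Sum>c\<in>UNIV. (xs ! m $ c) *s axis c 1)])" by (metis list_update_id)
        also have "\<dots> = (\<Sum>c\<in>UNIV. (xs ! m $ c) * F (xs[m := axis c 1]))"
          by (simp add: lin1_sum[OF lin] lin1_scale[OF lin])
        also have "\<dots> = 0"
        proof (rule sum.neutral, rule ballI)
          fix c
          have "F (xs[m := axis c 1]) = 0"
            using Suc.IH l h True by (auto simp: nth_list_update)
          then show "(xs ! m $ c) * F (xs[m := axis c 1]) = 0" by simp
        qed
        finally show ?thesis .
      qed
    qed
  qed
  from this[of n] len show ?thesis by auto
qed

lemma move_front:
  assumes a: "MLF k \<beta>" and al: "ALT k \<beta>" and lz: "Suc (length zs) = k" and p: "p \<le> length zs"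
  shows "\<beta> (y # zs) = (-1)^p * \<beta> (take p zs @ y # drop p zs)"
  using p
proof (induction p)
  case 0 then show ?case by simp
next
  case (Suc p)
  define ys where "ys = take p zs @ y # drop p zs"
  have lys: "length ys = k" using lz Suc.prems by (simp add: ys_def)
  have sp: "Suc p < k" using lz Suc.prems by simp
  have y1: "ys ! p = y" using Suc.prems by (simp add: ys_def nth_append)
  have y2: "ys ! Suc p = zs ! p" using Suc.prems by (simp add: ys_def nth_append)
  have pl: "p < length zs" using Suc.prems by simp
  have dz: "drop p zs = zs ! p # drop (Suc p) zs" using pl by (simp add: Cons_nth_drop_Suc)
  have tz: "take (Suc p) zs = take p zs @ [zs ! p]" using pl by (simp add: take_Suc_conv_app_nth)
  have lt: "length (take p zs) = p" using pl by simp
  have ys': "ys = take p zs @ y # zs ! p # drop (Suc p) zs" by (simp add: ys_def dz)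
  have "ys[p := ys ! Suc p, Suc p := ys ! p] = take (Suc p) zs @ y # drop (Suc p) zs"
    unfolding y1 y2 unfolding ys' tz using lt by (simp add: list_update_append)
  then have "\<beta> (take (Suc p) zs @ y # drop (Suc p) zs) = - \<beta> ys"
    using alt_swap[OF a al lys sp] by simp
  moreover have "\<beta> (y # zs) = (-1)^p * \<beta> ys" using Suc.IH Suc.prems by (simp add: ys_def)
  ultimately show ?case by simp
qed



lemma diag_sum:
  fixes X :: "nat \<Rightarrow> nat \<Rightarrow> complex"
  assumes "\<And>i. X i i = 0"
  shows "(\<Sum>i<N. \<Sum>j<N. X i j) = (\<Sum>i<N. \<Sum>j\<in>{i<..<N}. X i j + X j i)"
proof (induction N)
  case 0 then show ?case by simp
next
  case (Suc N)
  have e: "{i<..<Suc N} = insert N {i<..<N}" if "i < N" for i using that by auto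
  have "(\<Sum>i<Suc N. \<Sum>j\<in>{i<..<Suc N}. X i j + X j i)
      = (\<Sum>i<N. \<Sum>j\<in>{i<..<Suc N}. X i j + X j i)"
  proof -
    have "{N<..<Suc N} = {}" by auto
    then show ?thesis by simp
  qed
  also have "\<dots> = (\<Sum>i<N. (X i N + X N i) + (\<Sum>j\<in>{i<..<N}. X i j + X j i))"
    by (rule sum.cong) (auto simp: e)
  also have "\<dots> = (\<Sum>i<N. X i N) + (\<Sum>i<N. X N i) + (\<Sum>i<N. \<Sum>j\<in>{i<..<N}. X i j + X j i)"
    by (simp add: sum.distrib)
  finally have R: "(\<Sum>i<Suc N. \<Sum>j\<in>{i<..<Suc N}. X i j + X j i) =
      (\<Sum>i<N. X i N) + (\<Sum>i<N. X N i) + (\<Sum>i<N. \<Sum>j<N. X i j)" using Suc.IH by simp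
  have "(\<Sum>i<Suc N. \<Sum>j<Suc N. X i j) = (\<Sum>i<N. \<Sum>j<Suc N. X i j) + (\<Sum>j<Suc N. X N j)" by simp
  also have "\<dots> = (\<Sum>i<N. X i N + (\<Sum>j<N. X i j)) + (\<Sum>j<N. X N j) + X N N" by (simp add: add.commute)
  also have "\<dots> = (\<Sum>i<N. X i N) + (\<Sum>i<N. X N i) + (\<Sum>i<N. \<Sum>j<N. X i j)"
    using assms by (simp add: sum.distrib)
  finally show ?case using R by simp
qed

lemma neg1sq: "(-1::complex)^m * (-1)^m = 1"
  by (simp add: power_mult_distrib[symmetric])

lemma cre_axis: "cre (axis c (1::complex) :: complex^'m) = axis c 1"
  by (simp add: cre_def vec_eq_iff axis_def)
lemma cim_axis: "cim (axis c (1::complex) :: complex^'m) = 0"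
  by (simp add: cim_def vec_eq_iff axis_def)

lemma brC_axis: "bilinear B \<Longrightarrow> brC B (axis c 1) (axis d 1) $ i = complex_of_real (B (axis c 1) (axis d 1) $ i)"
  by (simp add: brC_def cre_axis cim_axis bilinear_lzero bilinear_rzero cpx_def complex_of_real_def)

lemma tr_zero:
  fixes B :: "real^'m \<Rightarrow> real^'m \<Rightarrow> real^'m"
  assumes B: "bilinear B" and anti: "\<forall>x y. B x y = - B y x" and un: "unimodular B"
  shows "(\<Sum>c\<in>UNIV. brC B (axis c 1) (axis d 1) $ c) = 0"
proof -
  have "(\<Sum>c\<in>UNIV. brC B (axis c 1) (axis d 1) $ c) = complex_of_real (\<Sum>c\<in>UNIV. B (axis c 1) (axis d 1) $ c)"
    by (simp add: brC_axis[OF B])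
  also have "(\<Sum>c\<in>UNIV. B (axis c 1) (axis d 1) $ c) = - (\<Sum>c\<in>UNIV. B (axis d 1) (axis c 1) $ c)"
  proof -
    have "B (axis c 1) (axis d 1) = - B (axis d 1) (axis c 1)" for c using anti by blast
    then show ?thesis by (simp add: sum_negf[symmetric])
  qed
  also have "(\<Sum>c\<in>UNIV. B (axis d 1) (axis c 1) $ c) = trace (matrix (B (axis d 1)))"
    by (simp add: trace_def matrix_def)
  also have "\<dots> = 0" using un by (simp add: unimodular_def)
  finally show ?thesis by simp
qed



lemma upt_split3g: "a \<le> m \<Longrightarrow> m < K \<Longrightarrow> [a..<K] = [a..<m] @ m # [Suc m..<K]"
  using upt_add_eq_append[of a m "K - m"] upt_conv_Cons[of m K] by simp

lemma filter_upt_True: "(\<And>x. a \<le> x \<Longrightarrow> x < b \<Longrightarrow> P x) \<Longrightarrow> filter P [a..<b] = [a..<b]"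
  by (rule filter_True) auto

lemma top_basis:
  fixes B :: "real^'m \<Rightarrow> real^'m \<Rightarrow> real^'m" and \<beta> :: "'m form" and f :: "nat \<Rightarrow> 'm"
  assumes B: "bilinear B" and anti: "\<forall>x y. B x y = - B y x" and un: "unimodular B"
    and a: "MLF k \<beta>" and al: "ALT k \<beta>" and NC: "CARD('m) = Suc k" and inj: "inj_on f {..<Suc k}"
  shows "dCE B k \<beta> (map (\<lambda>l. axis (f l) 1) [0..<Suc k]) = 0"
proof -
  define N where "N = Suc k"
  define e where "e = (\<lambda>l. axis (f l) (1::complex) :: complex^'m)"
  define cc where "cc = (\<lambda>i j l. brC B (e i) (e j) $ f l)"
  define D where "D = (\<lambda>i j. map e (filter (\<lambda>l. l \<noteq> i \<and> l \<noteq> j) [0..<N]))"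
  define Dx where "Dx = (\<lambda>m. map e (filter (\<lambda>l. l \<noteq> m) [0..<N]))"
  define X where "X = (\<lambda>i j. (-1::complex)^j * cc i j i * \<beta> (Dx j))"
  have injN: "inj_on f {..<N}" using inj by (simp add: N_def)
  have surj: "f ` {..<N} = UNIV"
    by (rule card_eq_UNIV_imp_eq_UNIV) (use injN NC in \<open>auto simp: card_image N_def\<close>)
  have reidx1: "(\<Sum>c\<in>UNIV. g c) = (\<Sum>l<N. g (f l))" for g :: "'m \<Rightarrow> complex^'m"
    using sum.reindex[OF injN, of g] surj by simp
  have reidx2: "(\<Sum>c\<in>UNIV. g c) = (\<Sum>l<N. g (f l))" for g :: "'m \<Rightarrow> complex"
    using sum.reindex[OF injN, of g] surj by simp
  have dA: "dCE B k \<beta> (map (\<lambda>l. axis (f l) 1) [0..<Suc k]) =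
      (\<Sum>i<N. \<Sum>j\<in>{i<..<N}. (-1)^(i+j) * \<beta> (brC B (e i) (e j) # D i j))"
    unfolding dCE_def
    by (intro sum.cong refl) (auto simp: D_def e_def N_def simp del: upt_Suc intro!: map_cong arg_cong[where f=\<beta>])
  have trm: "(-1)^(i+j) * \<beta> (brC B (e i) (e j) # D i j) = X i j + X j i" if ij: "i < j" "j < N" for i j
  proof -
    have lD: "length (D i j) = k - 1" using length_rest[OF ij] by (simp add: D_def N_def)
    have k1: "1 \<le> k" using ij N_def by simp
    have lin0: "lin1 (\<lambda>v. \<beta> (v # D i j))"
    proof -
      have "lin1 (\<lambda>v. \<beta> ((0 # D i j)[0 := v]))" by (rule MLD[OF a]) (use lD k1 in auto)
      then show ?thesis by simp
    qed
    have bexp: "brC B (e i) (e j) = (\<Sum>l<N. cc i j l *s e l)"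
      using basis_expansion[of "brC B (e i) (e j)"] reidx1[of "\<lambda>c. (brC B (e i) (e j) $ c) *s axis c 1"]
      by (simp add: cc_def e_def)
    have z: "\<beta> (e l # D i j) = 0" if "l \<in> {..<N} - {i, j}" for l
    proof -
      have "e l \<in> set (D i j)" using that by (auto simp: D_def)
      then have "\<not> distinct (e l # D i j)" by simp
      then show ?thesis using ALTD[OF al] lD k1 by simp
    qed
    have "\<beta> (brC B (e i) (e j) # D i j) = (\<Sum>l<N. cc i j l * \<beta> (e l # D i j))"
      by (simp add: bexp lin1_sum[OF lin0] lin1_scale[OF lin0])
    also have "\<dots> = (\<Sum>l\<in>{i,j}. cc i j l * \<beta> (e l # D i j))"
      by (rule sum.mono_neutral_right) (use ij z in auto)
    also have "\<dots> = cc i j i * \<beta> (e i # D i j) + cc i j j * \<beta> (e j # D i j)"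
      using ij by simp
    finally have S1: "\<beta> (brC B (e i) (e j) # D i j) = cc i j i * \<beta> (e i # D i j) + cc i j j * \<beta> (e j # D i j)" .
    have L3: "[0..<N] = [0..<i] @ i # [Suc i..<j] @ j # [Suc j..<N]"
      using upt_split3g[of 0 i N] upt_split3g[of "Suc i" j N] ij by simp
    have f1: "filter (\<lambda>l. l \<noteq> i \<and> l \<noteq> j) [0..<N] = [0..<i] @ [Suc i..<j] @ [Suc j..<N]"
      unfolding L3 using ij by (simp add: filter_upt_True)
    have f2: "filter (\<lambda>l. l \<noteq> j) [0..<N] = [0..<i] @ i # [Suc i..<j] @ [Suc j..<N]"
      unfolding L3 using ij by (simp add: filter_upt_True)
    have f3: "filter (\<lambda>l. l \<noteq> i) [0..<N] = [0..<i] @ [Suc i..<j] @ j # [Suc j..<N]"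
      unfolding L3 using ij by (simp add: filter_upt_True)
    have lD': "Suc (length (D i j)) = k" using lD k1 by simp
    have m1: "\<beta> (e i # D i j) = (-1)^i * \<beta> (Dx j)"
    proof -
      have "\<beta> (e i # D i j) = (-1)^i * \<beta> (take i (D i j) @ e i # drop i (D i j))"
        by (rule move_front[OF a al lD']) (simp add: D_def f1)
      moreover have "take i (D i j) @ e i # drop i (D i j) = Dx j"
        by (simp add: D_def Dx_def f1 f2)
      ultimately show ?thesis by simp
    qed
    have m2: "\<beta> (e j # D i j) = (-1)^(j - 1) * \<beta> (Dx i)"
    proof -
      have "\<beta> (e j # D i j) = (-1)^(j-1) * \<beta> (take (j-1) (D i j) @ e j # drop (j-1) (D i j))"
        by (rule move_front[OF a al lD']) (use ij in \<open>simp add: D_def f1\<close>)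
      moreover have "take (j-1) (D i j) @ e j # drop (j-1) (D i j) = Dx i"
        using ij by (simp add: D_def Dx_def f1 f3)
      ultimately show ?thesis by simp
    qed
    have ccs: "cc i j j = - cc j i j"
      unfolding cc_def using brC_antisym[OF anti, of "e i" "e j"] by simp
    obtain j' where j': "j = Suc j'" using ij by (cases j) auto
    have "(-1)^(i+j) * \<beta> (brC B (e i) (e j) # D i j)
       = (-1)^(i+j) * (cc i j i * ((-1)^i * \<beta> (Dx j)) + (- cc j i j) * ((-1)^(j - 1) * \<beta> (Dx i)))"
      by (simp add: S1 m1 m2 ccs)
    also have "\<dots> = X i j + X j i"
      unfolding X_def j' by (auto simp: minus_one_power_iff algebra_simps)
    finally show ?thesis .
  qed
  have diag: "X i i = 0" for i
  proof -
    have "cc i i i = 0" unfolding cc_def using brC_self[OF anti] by simp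
    then show ?thesis by (simp add: X_def)
  qed
  have tr: "(\<Sum>i<N. cc i j i) = 0" for j
  proof -
    have "(\<Sum>i<N. cc i j i) = (\<Sum>c\<in>UNIV. brC B (axis c 1) (axis (f j) 1) $ c)"
      using reidx2[of "\<lambda>c. brC B (axis c 1) (axis (f j) 1) $ c"] by (simp add: cc_def e_def)
    also have "\<dots> = 0" by (rule tr_zero[OF B anti un])
    finally show ?thesis .
  qed
  have "dCE B k \<beta> (map (\<lambda>l. axis (f l) 1) [0..<Suc k]) = (\<Sum>i<N. \<Sum>j\<in>{i<..<N}. X i j + X j i)"
    unfolding dA by (intro sum.cong refl) (auto intro: trm)
  also have "\<dots> = (\<Sum>i<N. \<Sum>j<N. X i j)" by (rule diag_sum[symmetric]) (rule diag)
  also have "\<dots> = (\<Sum>j<N. \<Sum>i<N. X i j)" by (rule sum.swap)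
  also have "\<dots> = (\<Sum>j<N. (-1)^j * \<beta> (Dx j) * (\<Sum>i<N. cc i j i))"
    by (simp add: X_def sum_distrib_left algebra_simps)
  also have "\<dots> = 0" by (simp add: tr)
  finally show ?thesis .
qed

lemma top_vanish:
  fixes B :: "real^'m \<Rightarrow> real^'m \<Rightarrow> real^'m" and \<beta> :: "'m form"
  assumes B: "bilinear B" and anti: "\<forall>x y. B x y = - B y x" and un: "unimodular B"
    and a: "MLF k \<beta>" and al: "ALT k \<beta>" and NC: "CARD('m) = Suc k" and len: "length xs = Suc k"
  shows "dCE B k \<beta> xs = 0"
proof (rule basis_red[OF dCE_ML[OF B a] _ len])
  fix f :: "nat \<Rightarrow> 'm"
  show "dCE B k \<beta> (map (\<lambda>l. axis (f l) 1) [0..<Suc k]) = 0"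
  proof (cases "inj_on f {..<Suc k}")
    case True
    then show ?thesis by (rule top_basis[OF B anti un a al NC])
  next
    case False
    have "\<not> distinct (map (\<lambda>l. axis (f l) (1::complex) :: complex^'m) [0..<Suc k])"
    proof
      assume "distinct (map (\<lambda>l. axis (f l) (1::complex) :: complex^'m) [0..<Suc k])"
      then have "inj_on (\<lambda>l. axis (f l) (1::complex) :: complex^'m) {..<Suc k}"
        by (simp add: distinct_map atLeast0LessThan del: upt_Suc)
      then have "inj_on f {..<Suc k}" by (auto simp: inj_on_def axis_eq_axis)
      then show False using False by simp
    qed
    then show ?thesis using ALTD[OF dCE_ALT[OF B anti a al]] by simp
  qed
qed



lemma MLF_sum: "finite A \<Longrightarrow> (\<And>p. p \<in> A \<Longrightarrow> MLF k (F p)) \<Longrightarrow> MLF k (\<lambda>xs. \<Sum>p\<in>A. F p xs)"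
  unfolding MLF_def by (auto intro!: lin1_setsum)

lemma ALT_sum: "(\<And>p. p \<in> A \<Longrightarrow> ALT k (F p)) \<Longrightarrow> ALT k (\<lambda>xs. \<Sum>p\<in>A. F p xs)"
  unfolding ALT_def by (auto intro!: sum.neutral)

lemma tcomp_zero: "(\<And>ys. length ys = length xs \<Longrightarrow> F ys = 0) \<Longrightarrow> tcomp J q F xs = 0"
  unfolding tcomp_def by (auto intro!: sum.neutral)

theorem lemma1:
  fixes B :: "real^'m \<Rightarrow> real^'m \<Rightarrow> real^'m"
    and J :: "real^'m \<Rightarrow> real^'m"
    and g :: "real^'m \<Rightarrow> real^'m \<Rightarrow> real"
    and n :: nat
  assumes "CARD('m) = 2 * n"
    and "is_lie_algebra B"
    and "unimodular B"
    and "hermitian_structure B J g"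
  shows "\<forall>xs. length xs = 2 * n \<longrightarrow>
           del B J (2 * n - 1) (delbar B J (2 * n - 2) (kpow J g (n - 1))) xs = 0"
proof -
  have B: "bilinear B" and anti: "\<forall>x y. B x y = - B y x"
    using assms(2) unfolding is_lie_algebra_def by blast+
  have J: "linear J" and g: "bilinear g"
    using assms(4) unfolding hermitian_structure_def by blast+
  have un: "unimodular B" by (rule assms(3))
  have "CARD('m) > 0" by simp
  then have n1: "n \<ge> 1" using assms(1) by simp
  define k0 where "k0 = 2 * n - 2"
  have k0: "2 * (n - 1) = k0" "2 * n - 1 = Suc k0" "CARD('m) = Suc (Suc k0)" "2 * n = Suc (Suc k0)"
    using n1 assms(1) by (auto simp: k0_def)
  define \<omega> where "\<omega> = kpow J g (n - 1)"
  have wML: "MLF k0 \<omega>" and wALT: "ALT k0 \<omega>"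
    using kpow_ML_ALT[OF J g, of "n - 1"] k0(1) by (auto simp: \<omega>_def)
  define \<gamma> where "\<gamma> = delbar B J k0 \<omega>"
  have geq: "\<gamma> = (\<lambda>xs. \<Sum>p\<le>k0. tcomp J p (dCE B k0 (tcomp J p \<omega>)) xs)"
    by (simp add: \<gamma>_def delbar_def fun_eq_iff)
  have tML: "MLF k0 (tcomp J p \<omega>)" for p by (rule tcomp_ML[OF J wML])
  have tALT: "ALT k0 (tcomp J p \<omega>)" for p by (rule tcomp_ALT[OF J wML wALT])
  have dML: "MLF (Suc k0) (dCE B k0 (tcomp J p \<omega>))" for p by (rule dCE_ML[OF B tML])
  have dALT: "ALT (Suc k0) (dCE B k0 (tcomp J p \<omega>))" for p by (rule dCE_ALT[OF B anti tML tALT])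
  have gML: "MLF (Suc k0) \<gamma>" unfolding geq
    by (rule MLF_sum) (auto intro: tcomp_ML[OF J dML])
  have gALT: "ALT (Suc k0) \<gamma>" unfolding geq
    by (rule ALT_sum) (auto intro: tcomp_ALT[OF J dML dALT])
  show ?thesis
  proof (intro allI impI)
    fix xs :: "(complex^'m) list"
    assume len: "length xs = 2 * n"
    have "tcomp J (p+1) (dCE B (Suc k0) (tcomp J p \<gamma>)) xs = 0" for p
    proof (rule tcomp_zero)
      fix ys :: "(complex^'m) list"
      assume "length ys = length xs"
      then have "length ys = Suc (Suc k0)" using len k0(4) by simp
      then show "dCE B (Suc k0) (tcomp J p \<gamma>) ys = 0"
        by (rule top_vanish[OF B anti un tcomp_ML[OF J gML] tcomp_ALT[OF J gML gALT] k0(3)])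
    qed
    then have "del B J (Suc k0) \<gamma> xs = 0" unfolding del_def by (simp add: sum.neutral)
    moreover have "delbar B J (2 * n - 2) (kpow J g (n - 1)) = \<gamma>" by (simp add: \<gamma>_def \<omega>_def k0_def)
    ultimately show "del B J (2 * n - 1) (delbar B J (2 * n - 2) (kpow J g (n - 1))) xs = 0"
      using k0(2) by simp
  qed
qed

end
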